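(* Let $D$ be an infinite alphabet. A language $L$ of finite words over $D$ is recognised by some (original) two-way $k$-register automaton for some $k$ if and only if it is recognised by some modified two-way $k'$-register automaton for some $k'$. That is, the original and the modified models of two-way register automata over an infinite alphabet have the same recognising power.
   Context: An (original) non-deterministic two-way $k$-register automaton over an infinite alphabet $D$ is a tuple $(Q,q_0,F,\tau_0,P)$ where $Q$ is a finite set of states, $q_0\in Q$ is the initial state, $F\subseteq Q$ is the set of final states, $\tau_0:\{1,\dots,k\}\to D\cup\{\triangleright,\triangleleft\}$ is the initial register assignment, and $P$ is a finite set of transitions of the forms: (1) $(i,q)\to(q',d)$: if the current state is $q$ and the observed symbol equals the value in register $i$, enter state $q'$ and move in direction $d$; (2) $q\to(q',i,d)$: if the current state is $q$ and the observed symbol is different from all values held in the registers, enter state $q'$, copy the current symbol into register $i$, and move in direction $d$. Here $i\in\{1,\dots,k\}$, $q,q'\in Q$, $d\in\{\mathrm{stay},\mathrm{left},\mathrm{right}\}$. The input word is written on a read-only tape delimited by $\triangleright$ and $\triangleleft$; the automaton starts in $q_0$ at the first letter, applies non-deterministically any applicable transitions, and accepts if it can ever reach a state in $F$; the recognised language is the set of accepted words. A modified two-way $k$-register automaton additionally allows transitions of the forms: (3) $(i,q)\to(q',j,d)$: if the current state is $q$ and the observed symbol equals the value in register $i$, enter $q'$, copy the current symbol into register $j$ and move in direction $d$; (4) $q\to(q',d)$: if the current state is $q$ and the observed symbol is different from all register values, enter $q'$ and move in direction $d$ (without storing). In particular, in the modified model the same value may be held in several registers. *)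

theory Defs
  imports Main
begin

datatype 'd sym = LEnd | REnd | Let 'd

datatype dir = Stay | MLeft | MRight

text \<open>EqT i q q' d        : (i,q) -> (q',d)          form (1)
  NewT q q' i d       : q -> (q',i,d)            form (2)
  EqStoreT i q q' j d : (i,q) -> (q',j,d)        form (3)
  NewSkipT q q' d     : q -> (q',d)              form (4)\<close>
datatype trans =
    EqT nat nat nat dir
  | NewT nat nat nat dir
  | EqStoreT nat nat nat nat dir
  | NewSkipT nat nat dir

record 'd reg_aut =
  states :: "nat set"
  init   :: nat
  final  :: "nat set"
  tau0   :: "nat \<Rightarrow> 'd sym"
  trans  :: "trans set"

fun trans_ok :: "nat \<Rightarrow> nat set \<Rightarrow> trans \<Rightarrow> bool" where
  "trans_ok k Q (EqT i q q' d) \<longleftrightarrow> i \<in> {1..k} \<and> q \<in> Q \<and> q' \<in> Q"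
| "trans_ok k Q (NewT q q' i d) \<longleftrightarrow> i \<in> {1..k} \<and> q \<in> Q \<and> q' \<in> Q"
| "trans_ok k Q (EqStoreT i q q' j d) \<longleftrightarrow> i \<in> {1..k} \<and> j \<in> {1..k} \<and> q \<in> Q \<and> q' \<in> Q"
| "trans_ok k Q (NewSkipT q q' d) \<longleftrightarrow> q \<in> Q \<and> q' \<in> Q"

fun is_original_trans :: "trans \<Rightarrow> bool" where
  "is_original_trans (EqT _ _ _ _) = True"
| "is_original_trans (NewT _ _ _ _) = True"
| "is_original_trans _ = False"

definition modified_ra :: "nat \<Rightarrow> 'd reg_aut \<Rightarrow> bool" where
  "modified_ra k A \<longleftrightarrow> finite (states A) \<and> init A \<in> states A \<and> final A \<subseteq> states A
     \<and> finite (trans A) \<and> (\<forall>t \<in> trans A. trans_ok k (states A) t)"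

definition original_ra :: "nat \<Rightarrow> 'd reg_aut \<Rightarrow> bool" where
  "original_ra k A \<longleftrightarrow> modified_ra k A \<and> (\<forall>t \<in> trans A. is_original_trans t)"

text \<open>Tape contents of word w: position 0 is the left marker, positions 1..n the letters,
  position n+1 the right marker.\<close>
definition tape :: "'d list \<Rightarrow> int \<Rightarrow> 'd sym" where
  "tape w p = (if p \<le> 0 then LEnd else if p \<ge> int (length w) + 1 then REnd
               else Let (w ! nat (p - 1)))"

fun move :: "dir \<Rightarrow> int \<Rightarrow> int" where
  "move Stay p = p"
| "move MLeft p = p - 1"
| "move MRight p = p + 1"

type_synonym 'd config = "nat \<times> int \<times> (nat \<Rightarrow> 'd sym)"

fun step_by :: "nat \<Rightarrow> 'd list \<Rightarrow> trans \<Rightarrow> 'd config \<Rightarrow> 'd config \<Rightarrow> bool" where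
  "step_by k w (EqT i q1 q2 d) (q, p, r) (q', p', r') \<longleftrightarrow>
     q = q1 \<and> r i = tape w p \<and> q' = q2 \<and> r' = r \<and> p' = move d p"
| "step_by k w (NewT q1 q2 j d) (q, p, r) (q', p', r') \<longleftrightarrow>
     q = q1 \<and> (\<forall>i\<in>{1..k}. r i \<noteq> tape w p) \<and> q' = q2 \<and> r' = r(j := tape w p) \<and> p' = move d p"
| "step_by k w (EqStoreT i q1 q2 j d) (q, p, r) (q', p', r') \<longleftrightarrow>
     q = q1 \<and> r i = tape w p \<and> q' = q2 \<and> r' = r(j := tape w p) \<and> p' = move d p"
| "step_by k w (NewSkipT q1 q2 d) (q, p, r) (q', p', r') \<longleftrightarrow>
     q = q1 \<and> (\<forall>i\<in>{1..k}. r i \<noteq> tape w p) \<and> q' = q2 \<and> r' = r \<and> p' = move d p"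

definition step :: "nat \<Rightarrow> 'd reg_aut \<Rightarrow> 'd list \<Rightarrow> 'd config \<Rightarrow> 'd config \<Rightarrow> bool" where
  "step k A w c c' \<longleftrightarrow> (\<exists>t \<in> trans A. step_by k w t c c')
      \<and> 0 \<le> fst (snd c') \<and> fst (snd c') \<le> int (length w) + 1"

definition accepts :: "nat \<Rightarrow> 'd reg_aut \<Rightarrow> 'd list \<Rightarrow> bool" where
  "accepts k A w \<longleftrightarrow> (\<exists>q p r. (step k A w)\<^sup>*\<^sup>* (init A, 1, tau0 A) (q, p, r) \<and> q \<in> final A)"

definition lang :: "nat \<Rightarrow> 'd reg_aut \<Rightarrow> 'd list set" where
  "lang k A = {w. accepts k A w}"

end

theory Submission
  imports Defs "HOL-Library.Countable"
begin

definition Sig :: "nat \<Rightarrow> nat list set" where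
  "Sig k = {xs. length xs = k \<and> set xs \<subseteq> {1..Suc k}}"

definition enc :: "nat \<Rightarrow> nat list \<Rightarrow> nat" where
  "enc q xs = to_nat (q, xs)"

lemma enc_eq[simp]: "enc q xs = enc q' xs' \<longleftrightarrow> q = q' \<and> xs = xs'"
  by (simp add: enc_def)

definition fr :: "nat \<Rightarrow> nat list \<Rightarrow> nat set" where
  "fr k xs = {1..Suc k} - set xs"

fun tr :: "nat \<Rightarrow> nat list \<Rightarrow> trans \<Rightarrow> trans set" where
  "tr k xs (EqT i q q' d) = {EqT (xs!(i-1)) (enc q xs) (enc q' xs) d}"
| "tr k xs (EqStoreT i q q' j d) = {EqT (xs!(i-1)) (enc q xs) (enc q' (xs[j-1 := xs!(i-1)])) d}"
| "tr k xs (NewT q q' i d) = (\<Union>f\<in>fr k xs. {NewT (enc q xs) (enc q' (xs[i-1:=f])) f d,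
                                         EqT f (enc q xs) (enc q' (xs[i-1:=f])) d})"
| "tr k xs (NewSkipT q q' d) = (\<Union>f\<in>fr k xs. {NewT (enc q xs) (enc q' xs) f d,
                                         EqT f (enc q xs) (enc q' xs) d})"

definition simB :: "nat \<Rightarrow> 'd reg_aut \<Rightarrow> (nat \<Rightarrow> 'd sym) \<Rightarrow> nat list \<Rightarrow> 'd reg_aut" where
  "simB k A r0 xs0 = \<lparr>states = (\<lambda>(q,xs). enc q xs) ` (states A \<times> Sig k),
     init = enc (init A) xs0,
     final = (\<lambda>(q,xs). enc q xs) ` (final A \<times> Sig k),
     tau0 = r0,
     trans = (\<Union>t\<in>trans A. \<Union>xs\<in>Sig k. tr k xs t)\<rparr>"

lemma finite_Sig: "finite (Sig k)"
proof -
  have "Sig k \<subseteq> {xs. set xs \<subseteq> {1..Suc k} \<and> length xs = k}" by (auto simp: Sig_def)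
  then show ?thesis using finite_lists_length_eq[of "{1..Suc k}" k] by (auto intro: finite_subset)
qed

lemma finite_tr: "finite (tr k xs t)"
  by (cases t) (auto simp: fr_def)

lemma Sig_upd: "xs \<in> Sig k \<Longrightarrow> v \<in> {1..Suc k} \<Longrightarrow> xs[j := v] \<in> Sig k"
  unfolding Sig_def using set_update_subset_insert[of xs j v] by auto

lemma Sig_nth: "xs \<in> Sig k \<Longrightarrow> i \<in> {1..k} \<Longrightarrow> xs!(i-1) \<in> {1..Suc k}"
proof -
  assume a: "xs \<in> Sig k" "i \<in> {1..k}"
  then have "i - 1 < length xs" by (auto simp: Sig_def)
  then have "xs!(i-1) \<in> set xs" by (rule nth_mem)
  then show ?thesis using a by (auto simp: Sig_def)
qed

lemma enc_in: "q \<in> S \<Longrightarrow> ys \<in> T \<Longrightarrow> enc q ys \<in> (\<lambda>(q,xs). enc q xs) ` (S \<times> T)"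
  by (rule image_eqI[where x="(q,ys)"]) auto

lemma fr_ex: "xs \<in> Sig k \<Longrightarrow> \<exists>f. f \<in> fr k xs"
proof (rule ccontr)
  assume xs: "xs \<in> Sig k" and "\<not> (\<exists>f. f \<in> fr k xs)"
  then have "{1..Suc k} \<subseteq> set xs" by (auto simp: fr_def)
  then have "card {1..Suc k} \<le> card (set xs)" by (rule card_mono[OF finite_set])
  also have "\<dots> \<le> length xs" by (rule card_length)
  finally show False using xs by (simp add: Sig_def)
qed

lemma simB_ok:
  assumes mA: "modified_ra k A" and xs0: "xs0 \<in> Sig k"
  shows "original_ra (Suc k) (simB k A r0 xs0)"
proof -
  have ok: "trans_ok (Suc k) (states (simB k A r0 xs0)) tB \<and> is_original_trans tB"
    if t: "t \<in> trans A" and xs: "xs \<in> Sig k" and tB: "tB \<in> tr k xs t" for t xs tB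
  proof -
    have tok: "trans_ok k (states A) t" using mA t by (auto simp: modified_ra_def)
    show ?thesis
    proof (cases t)
      case (EqT i q q' d)
      then show ?thesis using tok tB xs Sig_nth[OF xs, of i] by (auto simp: simB_def intro!: enc_in)
    next
      case (NewT q q' i d)
      then show ?thesis using tok tB xs Sig_upd[OF xs] by (auto simp: simB_def fr_def intro!: enc_in)
    next
      case (EqStoreT i q q' j d)
      then show ?thesis using tok tB xs Sig_nth[OF xs, of i] Sig_upd[OF xs] by (auto simp: simB_def intro!: enc_in)
    next
      case (NewSkipT q q' d)
      then show ?thesis using tok tB xs by (auto simp: simB_def fr_def intro!: enc_in)
    qed
  qed
  show ?thesis
    using mA xs0 ok finite_Sig finite_tr
    unfolding original_ra_def modified_ra_def
    by (auto simp: simB_def)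
qed


definition relR :: "nat \<Rightarrow> nat list \<Rightarrow> (nat \<Rightarrow> 'd sym) \<Rightarrow> (nat \<Rightarrow> 'd sym) \<Rightarrow> bool" where
  "relR k xs r rB \<longleftrightarrow> xs \<in> Sig k \<and> inj_on rB {1..Suc k} \<and> (\<forall>i\<in>{1..k}. r i = rB (xs!(i-1)))"

lemma nth_upd': "xs \<in> Sig k \<Longrightarrow> i \<in> {1..k} \<Longrightarrow> l \<in> {1..k} \<Longrightarrow>
   xs[i-1 := v] ! (l-1) = (if l = i then v else xs!(l-1))"
  by (auto simp: Sig_def nth_list_update)

lemma tr_in: "t \<in> trans A \<Longrightarrow> xs \<in> Sig k \<Longrightarrow> tB \<in> tr k xs t \<Longrightarrow> tB \<in> trans (simB k A r0 xs0)"
  by (auto simp: simB_def)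

lemma fwd:
  assumes mA: "modified_ra k A" and R: "relR k xs r rB"
  and st: "step k A w (q,p,r) (q',p',r')"
  shows "\<exists>xs' rB'. relR k xs' r' rB' \<and>
     step (Suc k) (simB k A r0 xs0) w (enc q xs, p, rB) (enc q' xs', p', rB')"
proof -
  from st obtain t where t: "t \<in> trans A" and sb: "step_by k w t (q,p,r) (q',p',r')"
    and pos: "0 \<le> p'" "p' \<le> int (length w) + 1" by (auto simp: step_def)
  have tok: "trans_ok k (states A) t" using mA t by (auto simp: modified_ra_def)
  have xs: "xs \<in> Sig k" and inj: "inj_on rB {1..Suc k}" and RR: "\<forall>i\<in>{1..k}. r i = rB (xs!(i-1))"
    using R by (auto simp: relR_def)
  show ?thesis
  proof (cases t)
    case (EqT i q1 q2 d)
    have "EqT (xs!(i-1)) (enc q xs) (enc q' xs) d \<in> trans (simB k A r0 xs0)"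
      using EqT sb by (intro tr_in[OF t xs]) auto
    moreover have "step_by (Suc k) w (EqT (xs!(i-1)) (enc q xs) (enc q' xs) d) (enc q xs, p, rB) (enc q' xs, p', rB)"
      using EqT sb tok RR by auto
    ultimately show ?thesis using R EqT sb pos unfolding step_def by fastforce
  next
    case (EqStoreT i q1 q2 j d)
    let ?xs = "xs[j-1 := xs!(i-1)]"
    have "EqT (xs!(i-1)) (enc q xs) (enc q' ?xs) d \<in> trans (simB k A r0 xs0)"
      using EqStoreT sb by (intro tr_in[OF t xs]) auto
    moreover have "step_by (Suc k) w (EqT (xs!(i-1)) (enc q xs) (enc q' ?xs) d) (enc q xs, p, rB) (enc q' ?xs, p', rB)"
      using EqStoreT sb tok RR by auto
    moreover have "relR k ?xs r' rB"
      using EqStoreT sb tok RR xs inj Sig_upd[OF xs Sig_nth[OF xs]] nth_upd'[OF xs]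
      unfolding relR_def by auto
    ultimately show ?thesis using EqStoreT sb pos unfolding step_def by fastforce
  next
    case (NewT q1 q2 i d)
    have new: "\<forall>l\<in>{1..k}. r l \<noteq> tape w p" and i: "i \<in> {1..k}" using NewT sb tok by auto
    show ?thesis
    proof (cases "\<exists>f\<in>{1..Suc k}. rB f = tape w p")
      case True
      then obtain f where f: "f \<in> {1..Suc k}" "rB f = tape w p" by blast
      have ffr: "f \<in> fr k xs"
      proof -
        have "f \<notin> set xs"
        proof
          assume "f \<in> set xs"
          then obtain l where l: "l < length xs" "xs ! l = f" by (auto simp: in_set_conv_nth)
          then have "Suc l \<in> {1..k}" using xs by (auto simp: Sig_def)
          then have "r (Suc l) = rB f" using RR l by fastforce
          then show False using new \<open>Suc l \<in> {1..k}\<close> f by auto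
        qed
        then show ?thesis using f by (auto simp: fr_def)
      qed
      let ?xs = "xs[i-1 := f]"
      have "EqT f (enc q xs) (enc q' ?xs) d \<in> trans (simB k A r0 xs0)"
        using NewT sb ffr by (intro tr_in[OF t xs]) auto
      moreover have "step_by (Suc k) w (EqT f (enc q xs) (enc q' ?xs) d) (enc q xs, p, rB) (enc q' ?xs, p', rB)"
        using NewT sb f by auto
      moreover have "relR k ?xs r' rB"
        using NewT sb i RR xs inj Sig_upd[OF xs f(1)] nth_upd'[OF xs i] f
        unfolding relR_def by auto
      ultimately show ?thesis using NewT sb pos unfolding step_def by fastforce
    next
      case False
      obtain f where ffr: "f \<in> fr k xs" using fr_ex[OF xs] by blast
      then have f: "f \<in> {1..Suc k}" "f \<notin> set xs" by (auto simp: fr_def)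
      let ?xs = "xs[i-1 := f]"
      let ?rB = "rB(f := tape w p)"
      have "NewT (enc q xs) (enc q' ?xs) f d \<in> trans (simB k A r0 xs0)"
        using NewT sb ffr by (intro tr_in[OF t xs]) auto
      moreover have "step_by (Suc k) w (NewT (enc q xs) (enc q' ?xs) f d) (enc q xs, p, rB) (enc q' ?xs, p', ?rB)"
        using NewT sb False by auto
      moreover have "relR k ?xs r' ?rB"
      proof -
        have "inj_on ?rB {1..Suc k}" using inj False f
          by (auto simp: inj_on_def)
        moreover have "\<forall>l\<in>{1..k}. r' l = ?rB (?xs!(l-1))"
        proof
          fix l assume l: "l \<in> {1..k}"
          have "l - 1 < length xs" using l xs by (auto simp: Sig_def)
          then have "xs!(l-1) \<noteq> f" using f(2) nth_mem by metis
          then show "r' l = ?rB (?xs!(l-1))"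
            using NewT sb RR l nth_upd'[OF xs i l] by auto
        qed
        ultimately show ?thesis using Sig_upd[OF xs f(1)] by (auto simp: relR_def)
      qed
      ultimately show ?thesis using NewT sb pos unfolding step_def by fastforce
    qed
  next
    case (NewSkipT q1 q2 d)
    have new: "\<forall>l\<in>{1..k}. r l \<noteq> tape w p" using NewSkipT sb tok by auto
    show ?thesis
    proof (cases "\<exists>f\<in>{1..Suc k}. rB f = tape w p")
      case True
      then obtain f where f: "f \<in> {1..Suc k}" "rB f = tape w p" by blast
      have ffr: "f \<in> fr k xs"
      proof -
        have "f \<notin> set xs"
        proof
          assume "f \<in> set xs"
          then obtain l where l: "l < length xs" "xs ! l = f" by (auto simp: in_set_conv_nth)
          then have "Suc l \<in> {1..k}" using xs by (auto simp: Sig_def)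
          then have "r (Suc l) = rB f" using RR l by fastforce
          then show False using new \<open>Suc l \<in> {1..k}\<close> f by auto
        qed
        then show ?thesis using f by (auto simp: fr_def)
      qed
      have "EqT f (enc q xs) (enc q' xs) d \<in> trans (simB k A r0 xs0)"
        using NewSkipT sb ffr by (intro tr_in[OF t xs]) auto
      moreover have "step_by (Suc k) w (EqT f (enc q xs) (enc q' xs) d) (enc q xs, p, rB) (enc q' xs, p', rB)"
        using NewSkipT sb f by auto
      ultimately show ?thesis using NewSkipT sb pos R unfolding step_def by fastforce
    next
      case False
      obtain f where ffr: "f \<in> fr k xs" using fr_ex[OF xs] by blast
      then have f: "f \<in> {1..Suc k}" "f \<notin> set xs" by (auto simp: fr_def)
      let ?rB = "rB(f := tape w p)"
      have "NewT (enc q xs) (enc q' xs) f d \<in> trans (simB k A r0 xs0)"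
        using NewSkipT sb ffr by (intro tr_in[OF t xs]) auto
      moreover have "step_by (Suc k) w (NewT (enc q xs) (enc q' xs) f d) (enc q xs, p, rB) (enc q' xs, p', ?rB)"
        using NewSkipT sb False by auto
      moreover have "relR k xs r' ?rB"
      proof -
        have "inj_on ?rB {1..Suc k}" using inj False f
          by (auto simp: inj_on_def)
        moreover have "\<forall>l\<in>{1..k}. r' l = ?rB (xs!(l-1))"
        proof
          fix l assume l: "l \<in> {1..k}"
          have "l - 1 < length xs" using l xs by (auto simp: Sig_def)
          then have "xs!(l-1) \<noteq> f" using f(2) nth_mem by metis
          then show "r' l = ?rB (xs!(l-1))"
            using NewSkipT sb RR l by auto
        qed
        ultimately show ?thesis using xs by (auto simp: relR_def)
      qed
      ultimately show ?thesis using NewSkipT sb pos unfolding step_def by fastforce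
    qed
  qed
qed


lemma bwd:
  assumes mA: "modified_ra k A" and R: "relR k xs r rB"
  and st: "step (Suc k) (simB k A r0 xs0) w (enc q xs, p, rB) (qB', p', rB')"
  shows "\<exists>q' xs' r'. qB' = enc q' xs' \<and> relR k xs' r' rB' \<and> step k A w (q,p,r) (q',p',r')"
proof -
  from st obtain tB where tB: "tB \<in> trans (simB k A r0 xs0)"
    and sb: "step_by (Suc k) w tB (enc q xs, p, rB) (qB', p', rB')"
    and pos: "0 \<le> p'" "p' \<le> int (length w) + 1" by (auto simp: step_def)
  from tB obtain t ys where t: "t \<in> trans A" and ys: "ys \<in> Sig k" and tBt: "tB \<in> tr k ys t"
    by (auto simp: simB_def)
  have tok: "trans_ok k (states A) t" using mA t by (auto simp: modified_ra_def)
  have xs: "xs \<in> Sig k" and inj: "inj_on rB {1..Suc k}" and RR: "\<forall>i\<in>{1..k}. r i = rB (xs!(i-1))"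
    using R by (auto simp: relR_def)
  show ?thesis
  proof (cases t)
    case (EqT i q1 q2 d)
    have "step_by k w t (q,p,r) (q2,p',r)" using EqT tBt sb tok RR by auto
    then have "step k A w (q,p,r) (q2,p',r)" using t pos unfolding step_def by auto
    then show ?thesis using EqT tBt sb R by auto
  next
    case (EqStoreT i q1 q2 j d)
    let ?xs = "xs[j-1 := xs!(i-1)]"
    have i: "i \<in> {1..k}" and j: "j \<in> {1..k}" using EqStoreT tok by auto
    have "step_by k w t (q,p,r) (q2,p',r(j := tape w p))" using EqStoreT tBt sb tok RR by auto
    then have "step k A w (q,p,r) (q2,p',r(j := tape w p))" using t pos unfolding step_def by auto
    moreover have "relR k ?xs (r(j := tape w p)) rB'"
      using EqStoreT tBt sb tok RR xs inj Sig_upd[OF xs Sig_nth[OF xs i]] nth_upd'[OF xs j]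
      unfolding relR_def by auto
    ultimately show ?thesis using EqStoreT tBt sb by auto
  next
    case (NewT q1 q2 i d)
    have i: "i \<in> {1..k}" using NewT tok by auto
    from tBt NewT obtain f where ffr: "f \<in> fr k ys" and
      tBf: "tB = NewT (enc q1 ys) (enc q2 (ys[i-1:=f])) f d \<or> tB = EqT f (enc q1 ys) (enc q2 (ys[i-1:=f])) d"
      by auto
    have eqs: "q1 = q" "ys = xs" using sb tBf by auto
    have f: "f \<in> {1..Suc k}" "f \<notin> set xs" using ffr eqs by (auto simp: fr_def)
    have notf: "xs!(l-1) \<noteq> f" if l: "l \<in> {1..k}" for l
    proof -
      have "l - 1 < length xs" using l xs by (auto simp: Sig_def)
      then show ?thesis using f(2) nth_mem by metis
    qed
    let ?xs = "xs[i-1 := f]"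
    from tBf show ?thesis
    proof
      assume tB1: "tB = NewT (enc q1 ys) (enc q2 (ys[i-1:=f])) f d"
      have new: "\<forall>l\<in>{1..Suc k}. rB l \<noteq> tape w p" using sb tB1 by auto
      have "\<forall>l\<in>{1..k}. r l \<noteq> tape w p"
      proof
        fix l assume l: "l \<in> {1..k}"
        show "r l \<noteq> tape w p" using RR l new Sig_nth[OF xs l] by auto
      qed
      then have "step_by k w t (q,p,r) (q2,p',r(i := tape w p))" using NewT tB1 sb by auto
      then have "step k A w (q,p,r) (q2,p',r(i := tape w p))" using t pos unfolding step_def by auto
      moreover have "relR k ?xs (r(i := tape w p)) rB'"
      proof -
        have rB': "rB' = rB(f := tape w p)" using sb tB1 by auto
        have "inj_on rB' {1..Suc k}" using inj new f rB' by (auto simp: inj_on_def)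
        moreover have "\<forall>l\<in>{1..k}. (r(i := tape w p)) l = rB' (?xs!(l-1))"
          using RR nth_upd'[OF xs i] notf rB' by auto
        ultimately show ?thesis using Sig_upd[OF xs f(1)] by (auto simp: relR_def)
      qed
      ultimately show ?thesis using sb tB1 eqs by auto
    next
      assume tB1: "tB = EqT f (enc q1 ys) (enc q2 (ys[i-1:=f])) d"
      have eq: "rB f = tape w p" and rB': "rB' = rB" using sb tB1 by auto
      have "\<forall>l\<in>{1..k}. r l \<noteq> tape w p"
      proof
        fix l assume l: "l \<in> {1..k}"
        have "rB (xs!(l-1)) \<noteq> rB f"
          using inj Sig_nth[OF xs l] f(1) notf[OF l] by (auto simp: inj_on_def)
        then show "r l \<noteq> tape w p" using RR l eq by auto
      qed
      then have "step_by k w t (q,p,r) (q2,p',r(i := tape w p))" using NewT tB1 sb by auto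
      then have "step k A w (q,p,r) (q2,p',r(i := tape w p))" using t pos unfolding step_def by auto
      moreover have "relR k ?xs (r(i := tape w p)) rB'"
      proof -
        have "\<forall>l\<in>{1..k}. (r(i := tape w p)) l = rB' (?xs!(l-1))"
          using RR nth_upd'[OF xs i] notf rB' eq by auto
        then show ?thesis using Sig_upd[OF xs f(1)] inj rB' by (auto simp: relR_def)
      qed
      ultimately show ?thesis using sb tB1 eqs by auto
    qed
  next
    case (NewSkipT q1 q2 d)
    from tBt NewSkipT obtain f where ffr: "f \<in> fr k ys" and
      tBf: "tB = NewT (enc q1 ys) (enc q2 ys) f d \<or> tB = EqT f (enc q1 ys) (enc q2 ys) d"
      by auto
    have eqs: "q1 = q" "ys = xs" using sb tBf by auto
    have f: "f \<in> {1..Suc k}" "f \<notin> set xs" using ffr eqs by (auto simp: fr_def)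
    have notf: "xs!(l-1) \<noteq> f" if l: "l \<in> {1..k}" for l
    proof -
      have "l - 1 < length xs" using l xs by (auto simp: Sig_def)
      then show ?thesis using f(2) nth_mem by metis
    qed
    from tBf show ?thesis
    proof
      assume tB1: "tB = NewT (enc q1 ys) (enc q2 ys) f d"
      have new: "\<forall>l\<in>{1..Suc k}. rB l \<noteq> tape w p" using sb tB1 by auto
      have "\<forall>l\<in>{1..k}. r l \<noteq> tape w p"
      proof
        fix l assume l: "l \<in> {1..k}"
        show "r l \<noteq> tape w p" using RR l new Sig_nth[OF xs l] by auto
      qed
      then have "step_by k w t (q,p,r) (q2,p',r)" using NewSkipT tB1 sb by auto
      then have "step k A w (q,p,r) (q2,p',r)" using t pos unfolding step_def by auto
      moreover have "relR k xs r rB'"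
      proof -
        have rB': "rB' = rB(f := tape w p)" using sb tB1 by auto
        have "inj_on rB' {1..Suc k}" using inj new f rB' by (auto simp: inj_on_def)
        moreover have "\<forall>l\<in>{1..k}. r l = rB' (xs!(l-1))"
          using RR notf rB' by auto
        ultimately show ?thesis using xs by (auto simp: relR_def)
      qed
      ultimately show ?thesis using sb tB1 eqs by auto
    next
      assume tB1: "tB = EqT f (enc q1 ys) (enc q2 ys) d"
      have eq: "rB f = tape w p" and rB': "rB' = rB" using sb tB1 by auto
      have "\<forall>l\<in>{1..k}. r l \<noteq> tape w p"
      proof
        fix l assume l: "l \<in> {1..k}"
        have "rB (xs!(l-1)) \<noteq> rB f"
          using inj Sig_nth[OF xs l] f(1) notf[OF l] by (auto simp: inj_on_def)
        then show "r l \<noteq> tape w p" using RR l eq by auto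
      qed
      then have "step_by k w t (q,p,r) (q2,p',r)" using NewSkipT tB1 sb by auto
      then have "step k A w (q,p,r) (q2,p',r)" using t pos unfolding step_def by auto
      then show ?thesis using sb tB1 eqs R rB' by auto
    qed
  qed
qed


lemma star_fwd:
  assumes mA: "modified_ra k A"
  shows "(step k A w)\<^sup>*\<^sup>* c0 c \<Longrightarrow> c0 = (q0,p0,r0') \<Longrightarrow> relR k xs0' r0' rB0 \<Longrightarrow>
    \<exists>xs rB. relR k xs (snd (snd c)) rB \<and>
      (step (Suc k) (simB k A rr xx) w)\<^sup>*\<^sup>* (enc q0 xs0', p0, rB0) (enc (fst c) xs, fst (snd c), rB)"
proof (induction c rule: rtranclp_induct)
  case base
  then show ?case by auto
next
  case (step b c)
  then obtain xs rB where R: "relR k xs (snd (snd b)) rB" and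
    S: "(step (Suc k) (simB k A rr xx) w)\<^sup>*\<^sup>* (enc q0 xs0', p0, rB0) (enc (fst b) xs, fst (snd b), rB)"
    by blast
  obtain q p r where b: "b = (q,p,r)" by (cases b) auto
  obtain q' p' r' where c: "c = (q',p',r')" by (cases c) auto
  from fwd[OF mA, of xs r rB w q p q' p' r' rr xx] R step.hyps(2) b c
  obtain xs' rB' where "relR k xs' r' rB'"
    "step (Suc k) (simB k A rr xx) w (enc q xs, p, rB) (enc q' xs', p', rB')" by auto
  then show ?case using S b c by (auto intro: rtranclp.rtrancl_into_rtrancl)
qed

lemma star_bwd:
  assumes mA: "modified_ra k A"
  shows "(step (Suc k) (simB k A rr xx) w)\<^sup>*\<^sup>* c0 c \<Longrightarrow> c0 = (enc q0 xs0', p0, rB0) \<Longrightarrow> relR k xs0' r0' rB0 \<Longrightarrow>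
    \<exists>q xs r. fst c = enc q xs \<and> relR k xs r (snd (snd c)) \<and>
      (step k A w)\<^sup>*\<^sup>* (q0, p0, r0') (q, fst (snd c), r)"
proof (induction c rule: rtranclp_induct)
  case base
  then show ?case by auto
next
  case (step b c)
  then obtain q xs r where E: "fst b = enc q xs" and R: "relR k xs r (snd (snd b))" and
    S: "(step k A w)\<^sup>*\<^sup>* (q0, p0, r0') (q, fst (snd b), r)"
    by blast
  obtain qb p rB where b: "b = (qb,p,rB)" by (cases b) auto
  obtain qc p' rB' where c: "c = (qc,p',rB')" by (cases c) auto
  from bwd[OF mA, of xs r rB rr xx w q p qc p' rB'] R E step.hyps(2) b c
  obtain q' xs' r' where "qc = enc q' xs'" "relR k xs' r' rB'" "step k A w (q,p,r) (q',p',r')"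
    by auto
  then show ?case using S b c by (auto intro: rtranclp.rtrancl_into_rtrancl)
qed

lemma init_ex:
  assumes inf: "infinite (UNIV :: 'd set)"
  shows "\<exists>xs (rB :: nat \<Rightarrow> 'd sym). relR n xs r rB"
proof (induction n)
  case 0
  show ?case by (rule exI[of _ "[]"], rule exI[of _ "\<lambda>_. LEnd"]) (auto simp: relR_def Sig_def)
next
  case (Suc n)
  then obtain xs rB where xs: "length xs = n" "set xs \<subseteq> {1..Suc n}"
    and inj: "inj_on rB {1..Suc n}" and RR: "\<forall>i\<in>{1..n}. r i = rB (xs!(i-1))"
    by (auto simp: relR_def Sig_def)
  have old: "\<forall>i\<in>{1..n}. (xs @ [x]) ! (i - 1) = xs ! (i-1)" for x :: nat
    using xs(1) by (auto simp: nth_append)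
  have last: "(xs @ [x]) ! (Suc n - 1) = x" for x :: nat using xs(1) by (simp add: nth_append)
  have xsle: "\<forall>i\<in>{1..n}. xs ! (i-1) \<in> {1..Suc n}"
  proof
    fix i assume "i \<in> {1..n}"
    then have "i - 1 < length xs" using xs by auto
    then show "xs ! (i-1) \<in> {1..Suc n}" using xs(2) nth_mem by blast
  qed
  have iv: "{1..Suc (Suc n)} = insert (Suc (Suc n)) {1..Suc n}" by auto
  show ?case
  proof (cases "\<exists>j\<in>{1..Suc n}. r (Suc n) = rB j")
    case True
    then obtain j where j: "j \<in> {1..Suc n}" "r (Suc n) = rB j" by blast
    have "finite {d. Let d \<in> rB ` {1..Suc n}}"
      by (rule finite_vimageI[where h = Let, unfolded vimage_def]) (auto simp: inj_def)
    then obtain d where d: "Let d \<notin> rB ` {1..Suc n}"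
      using ex_new_if_finite[OF inf] by auto
    let ?rB = "rB(Suc (Suc n) := Let d)"
    have "relR (Suc n) (xs @ [j]) r ?rB"
      unfolding relR_def Sig_def
    proof (intro conjI CollectI)
      show "length (xs @ [j]) = Suc n" using xs by simp
      show "set (xs @ [j]) \<subseteq> {1..Suc (Suc n)}" using xs j by auto
      show "inj_on ?rB {1..Suc (Suc n)}" unfolding iv using inj d
        by (auto simp: inj_on_def image_iff)
      show "\<forall>i\<in>{1..Suc n}. r i = ?rB ((xs @ [j]) ! (i - 1))"
      proof
        fix i assume i: "i \<in> {1..Suc n}"
        show "r i = ?rB ((xs @ [j]) ! (i - 1))"
        proof (cases "i = Suc n")
          case True then show ?thesis using last j by auto
        next
          case False
          then have "i \<in> {1..n}" using i by auto
          then show ?thesis using old RR xsle by fastforce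
        qed
      qed
    qed
    then show ?thesis by blast
  next
    case False
    let ?rB = "rB(Suc (Suc n) := r (Suc n))"
    have "relR (Suc n) (xs @ [Suc (Suc n)]) r ?rB"
      unfolding relR_def Sig_def
    proof (intro conjI CollectI)
      show "length (xs @ [Suc (Suc n)]) = Suc n" using xs by simp
      show "set (xs @ [Suc (Suc n)]) \<subseteq> {1..Suc (Suc n)}" using xs by auto
      show "inj_on ?rB {1..Suc (Suc n)}" unfolding iv using inj False
        by (auto simp: inj_on_def)
      show "\<forall>i\<in>{1..Suc n}. r i = ?rB ((xs @ [Suc (Suc n)]) ! (i - 1))"
      proof
        fix i assume i: "i \<in> {1..Suc n}"
        show "r i = ?rB ((xs @ [Suc (Suc n)]) ! (i - 1))"
        proof (cases "i = Suc n")
          case True then show ?thesis using last by auto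
        next
          case False
          then have "i \<in> {1..n}" using i by auto
          then show ?thesis using old RR xsle by fastforce
        qed
      qed
    qed
    then show ?thesis by blast
  qed
qed


lemma sim_lang:
  assumes mA: "modified_ra k A" and R0: "relR k xs0 (tau0 A) rB0"
  shows "lang (Suc k) (simB k A rB0 xs0) = lang k A"
proof (intro set_eqI iffI)
  fix w assume "w \<in> lang (Suc k) (simB k A rB0 xs0)"
  then obtain qB p rB where S: "(step (Suc k) (simB k A rB0 xs0) w)\<^sup>*\<^sup>* (enc (init A) xs0, 1, rB0) (qB, p, rB)"
    and F: "qB \<in> final (simB k A rB0 xs0)"
    by (auto simp: lang_def accepts_def simB_def)
  from star_bwd[OF mA S refl R0] obtain q xs r where
    "qB = enc q xs" "(step k A w)\<^sup>*\<^sup>* (init A, 1, tau0 A) (q, p, r)" by auto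
  moreover from F obtain q1 ys where "q1 \<in> final A" "qB = enc q1 ys" by (auto simp: simB_def)
  ultimately show "w \<in> lang k A" by (auto simp: lang_def accepts_def)
next
  fix w assume "w \<in> lang k A"
  then obtain q p r where S: "(step k A w)\<^sup>*\<^sup>* (init A, 1, tau0 A) (q, p, r)" and F: "q \<in> final A"
    by (auto simp: lang_def accepts_def)
  from star_fwd[OF mA S refl R0, of rB0 xs0] obtain xs rB where
    R: "relR k xs r rB" and
    S': "(step (Suc k) (simB k A rB0 xs0) w)\<^sup>*\<^sup>* (enc (init A) xs0, 1, rB0) (enc q xs, p, rB)"
    by auto
  have "enc q xs \<in> final (simB k A rB0 xs0)" using F R by (auto simp: simB_def relR_def intro!: enc_in)
  moreover have ini: "init (simB k A rB0 xs0) = enc (init A) xs0" and tu: "tau0 (simB k A rB0 xs0) = rB0"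
    by (auto simp: simB_def)
  ultimately show "w \<in> lang (Suc k) (simB k A rB0 xs0)" using S'
    unfolding lang_def accepts_def mem_Collect_eq ini tu by blast
qed

theorem lemma1:
  fixes L :: "'d list set"
  assumes "infinite (UNIV :: 'd set)"
  shows "(\<exists>k (A :: 'd reg_aut). original_ra k A \<and> lang k A = L)
     \<longleftrightarrow> (\<exists>k' (A' :: 'd reg_aut). modified_ra k' A' \<and> lang k' A' = L)"
proof
  assume "\<exists>k (A :: 'd reg_aut). original_ra k A \<and> lang k A = L"
  then show "\<exists>k' (A' :: 'd reg_aut). modified_ra k' A' \<and> lang k' A' = L"
    by (auto simp: original_ra_def)
next
  assume "\<exists>k' (A' :: 'd reg_aut). modified_ra k' A' \<and> lang k' A' = L"
  then obtain k and A :: "'d reg_aut" where mA: "modified_ra k A" and L: "lang k A = L" by blast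
  obtain xs0 and rB0 :: "nat \<Rightarrow> 'd sym" where R0: "relR k xs0 (tau0 A) rB0"
    using init_ex[OF assms] by blast
  have "original_ra (Suc k) (simB k A rB0 xs0)"
    using simB_ok[OF mA] R0 by (auto simp: relR_def)
  moreover have "lang (Suc k) (simB k A rB0 xs0) = L" using sim_lang[OF mA R0] L by simp
  ultimately show "\<exists>k (A :: 'd reg_aut). original_ra k A \<and> lang k A = L" by blast
qed

end
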